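(* Let $f_{r,k}(x)=x^2\exp(r-x)+k$. For any $0\leq k<2$ there exists $r^*(k)$ such that for all $r\geq r^*(k)$ the map $f_{r,k}$ has an unstable fixed point $x_f>2$, i.e. $f_{r,k}(x_f)=x_f$ and $|f_{r,k}'(x_f)|>1$. *)

theory Defs
  imports "HOL-Analysis.Analysis"
begin

definition f_rk :: "real \<Rightarrow> real \<Rightarrow> real \<Rightarrow> real" where
  "f_rk r k x = x^2 * exp (r - x) + k"

end

theory Submission
  imports Defs
begin

lemma deriv_f: "deriv (f_rk r k) x = (2*x - x^2) * exp (r - x)"
proof -
  have "((\<lambda>x. x^2 * exp (r - x) + k) has_field_derivative (2*x - x^2) * exp (r - x)) (at x)"
    by (auto intro!: derivative_eq_intros simp: algebra_simps power2_eq_square)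
  then show ?thesis unfolding f_rk_def[abs_def] by (rule DERIV_imp_deriv)
qed

theorem lemma3p4:
  fixes k :: real
  assumes "0 \<le> k" and "k < 2"
  shows "\<exists>rstar::real. \<forall>r\<ge>rstar. \<exists>xf::real. xf > 2 \<and> f_rk r k xf = xf \<and>
           \<bar>deriv (f_rk r k) xf\<bar> > 1"
proof (rule exI[of _ 6], intro allI impI)
  fix r :: real assume r: "6 \<le> r"
  define g where "g = (\<lambda>x. x^2 * exp (r - x) - x + k)"
  define X where "X = 2 * exp r + 3"
  have er: "exp r \<ge> 2" using r exp_ge_add_one_self[of r] by linarith
  have X6: "6 \<le> X" using er unfolding X_def by simp
  have e6: "exp (r - 6) \<ge> 1" using r by simp
  have "g 6 = 36 * exp (r - 6) - 6 + k" unfolding g_def by (simp add: power2_eq_square)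
  hence g6: "g 6 \<ge> 0" using assms e6 by linarith
  have eX: "exp X \<ge> X^2/2" using exp_lower_Taylor_quadratic[of X] X6 by simp
  have Xp: "X^2 > 0" using X6 by simp
  have "X^2 * exp r < (X - k) * exp X"
  proof -
    have h1: "(X-2)/2 = exp r + 1/2" by (simp add: X_def)
    have "exp r < (X-2)/2" unfolding h1 by simp
    hence "X^2 * exp r < X^2 * ((X - 2)/2)"
      using Xp by (rule mult_strict_left_mono)
    also have "\<dots> = (X-2) * (X^2/2)" by simp
    also have "\<dots> \<le> (X - k) * (X^2/2)" using assms Xp by (intro mult_right_mono) auto
    also have "\<dots> \<le> (X - k) * exp X" using eX assms X6 by (intro mult_left_mono) auto
    finally show ?thesis .
  qed
  hence "X^2 * exp r / exp X < X - k" by (simp add: pos_divide_less_eq)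
  hence "X^2 * exp (r - X) < X - k" by (simp add: exp_diff)
  hence gX: "g X \<le> 0" unfolding g_def by simp
  have "continuous_on {6..X} g" unfolding g_def by (intro continuous_intros)
  then obtain xf where xf: "6 \<le> xf" "xf \<le> X" "g xf = 0"
    using IVT2'[of g X 0 6] g6 gX X6 by auto
  have fix1: "xf^2 * exp (r - xf) = xf - k" using xf(3) unfolding g_def by simp
  have "(2*xf - xf^2) * exp (r - xf) = (2 - xf) / xf * (xf^2 * exp (r - xf))"
    using xf(1) by (simp add: field_simps power2_eq_square)
  hence d: "deriv (f_rk r k) xf = -((xf - 2) * (xf - k) / xf)"
    unfolding deriv_f fix1 using xf(1) by (simp add: field_simps)
  have "(xf - 2) * (xf - k) > xf"
  proof -
    have "(xf - 2) * (xf - k) \<ge> (xf - 2) * (xf - 2)" using assms xf(1) by (intro mult_left_mono) auto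
    moreover have "(xf - 1) * (xf - 4) > 0" using xf(1) by (intro mult_pos_pos) auto
    hence "(xf - 2) * (xf - 2) > xf" by (simp add: algebra_simps)
    ultimately show ?thesis by linarith
  qed
  hence "(xf - 2) * (xf - k) / xf > 1" using xf(1) by (simp add: pos_less_divide_eq)
  hence "\<bar>deriv (f_rk r k) xf\<bar> > 1" unfolding d by linarith
  moreover have "f_rk r k xf = xf" using fix1 unfolding f_rk_def by simp
  ultimately show "\<exists>xf::real. xf > 2 \<and> f_rk r k xf = xf \<and> \<bar>deriv (f_rk r k) xf\<bar> > 1"
    using xf(1) by (intro exI[of _ xf]) auto
qed

end
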